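(* Let $m\ge2$, $C=C_{2m}(1,1)=J_{2m}+E_{m-1,m+1}-E_{m,m+2}$, and let $v_0,v_{\pi/4},v_{\pi/2}$ be the eigenvectors defined below, with normalizations $\widehat v_\theta=v_\theta/\|v_\theta\|$. Then $$\bigl|\langle\widehat v_0,\widehat v_{\pi/4}\rangle\bigr|>\bigl|\langle\widehat v_{\pi/4},\widehat v_{\pi/2}\rangle\bigr|.$$ In particular, $C_{2m}(1,1)$ is not rotationally invariant.
   Context: $J_n$ is the $n\times n$ nilpotent Jordan block; $E_{a,b}$ is the matrix unit. $X$ is rotationally invariant if $X$ and $e^{i\theta}X$ are unitarily similar for every real $\theta$. $U_k$ are Chebyshev polynomials of the second kind ($U_{-1}=0$, $U_0=1$, $U_{k+1}(u)=2uU_k(u)-U_{k-1}(u)$). Let $\lambda_m$ be the largest root of $P_m(x)=U_m(x)-U_{m-1}(x)-U_{m-2}(x)$ and write $U_r=U_r(\lambda_m)$; $\lambda_m$ is the largest eigenvalue of $\operatorname{Re}C$, $\operatorname{Re}(e^{i\pi/4}C)$ and $\operatorname{Re}(iC)$, with respective eigenvectors: $v_0(k)=U_{k-1}$ ($1\le k\le m-1$), $\frac12U_{m-1}$ ($k=m,m+1$), $0$ ($m+2\le k\le 2m$); with $\eta=e^{-i\pi/4}$, $\alpha=\frac1{1+\eta}$, $q=(\sqrt2-1)e^{-i\pi/4}$: $v_{\pi/4}(k)=\eta^{k-1}U_{k-1}$ ($1\le k\le m-1$), $\eta^{k-1}\alpha U_{m-1}$ ($k=m,m+1$), $\eta^{k-1}qU_{2m-k}$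 ($m+2\le k\le2m$); with $\beta=\frac{1+i}2$: $v_{\pi/2}(k)=(-i)^{k-1}U_{k-1}$ ($1\le k\le m-1$), $(-i)^{k-1}\beta U_{m-1}$ ($k=m,m+1$), $(-i)^{k-1}U_{2m-k}$ ($m+2\le k\le 2m$). $\operatorname{Re}Y=\frac12(Y+Y^* )$. *)

theory Defs
  imports Complex_Main
begin

(* Matrices and vectors of size n are represented as functions with
   1-based indices ranging over {1..n}. *)

fun chebU :: "nat \<Rightarrow> real \<Rightarrow> real" where
  "chebU 0 u = 1"
| "chebU (Suc 0) u = 2 * u"
| "chebU (Suc (Suc r)) u = 2 * u * chebU (Suc r) u - chebU r u"

definition P :: "nat \<Rightarrow> real \<Rightarrow> real" where
  "P m x = chebU m x - chebU (m - 1) x - chebU (m - 2) x"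

definition lam :: "nat \<Rightarrow> real" where
  "lam m = Max {x. P m x = 0}"

definition Uv :: "nat \<Rightarrow> nat \<Rightarrow> complex" where
  "Uv m r = complex_of_real (chebU r (lam m))"

definition Jblock :: "nat \<Rightarrow> nat \<Rightarrow> nat \<Rightarrow> complex" where
  "Jblock n i j = (if 1 \<le> i \<and> i < n \<and> j = i + 1 then 1 else 0)"

definition Emat :: "nat \<Rightarrow> nat \<Rightarrow> nat \<Rightarrow> nat \<Rightarrow> complex" where
  "Emat a b i j = (if i = a \<and> j = b then 1 else 0)"

definition Cmat :: "nat \<Rightarrow> nat \<Rightarrow> nat \<Rightarrow> complex" where
  "Cmat m i j = Jblock (2 * m) i j + Emat (m - 1) (m + 1) i j - Emat m (m + 2) i j"

definition v0 :: "nat \<Rightarrow> nat \<Rightarrow> complex" where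
  "v0 m k = (if 1 \<le> k \<and> k \<le> m - 1 then Uv m (k - 1)
             else if k = m \<or> k = m + 1 then Uv m (m - 1) / 2
             else 0)"

definition eta :: complex where "eta = cis (- pi / 4)"
definition alpha :: complex where "alpha = 1 / (1 + eta)"
definition qc :: complex where "qc = complex_of_real (sqrt 2 - 1) * cis (- pi / 4)"
definition betac :: complex where "betac = (1 + \<i>) / 2"

definition v4 :: "nat \<Rightarrow> nat \<Rightarrow> complex" where
  "v4 m k = (if 1 \<le> k \<and> k \<le> m - 1 then eta ^ (k - 1) * Uv m (k - 1)
             else if k = m \<or> k = m + 1 then eta ^ (k - 1) * alpha * Uv m (m - 1)
             else if m + 2 \<le> k \<and> k \<le> 2 * m then eta ^ (k - 1) * qc * Uv m (2 * m - k)
             else 0)"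

definition v2 :: "nat \<Rightarrow> nat \<Rightarrow> complex" where
  "v2 m k = (if 1 \<le> k \<and> k \<le> m - 1 then (- \<i>) ^ (k - 1) * Uv m (k - 1)
             else if k = m \<or> k = m + 1 then (- \<i>) ^ (k - 1) * betac * Uv m (m - 1)
             else if m + 2 \<le> k \<and> k \<le> 2 * m then (- \<i>) ^ (k - 1) * Uv m (2 * m - k)
             else 0)"

definition cinner :: "nat \<Rightarrow> (nat \<Rightarrow> complex) \<Rightarrow> (nat \<Rightarrow> complex) \<Rightarrow> complex" where
  "cinner n v w = (\<Sum>k=1..n. v k * cnj (w k))"

definition vnorm :: "nat \<Rightarrow> (nat \<Rightarrow> complex) \<Rightarrow> real" where
  "vnorm n v = sqrt (\<Sum>k=1..n. (cmod (v k))\<^sup>2)"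

definition normalize :: "nat \<Rightarrow> (nat \<Rightarrow> complex) \<Rightarrow> nat \<Rightarrow> complex" where
  "normalize n v = (\<lambda>k. v k / complex_of_real (vnorm n v))"

definition mmul :: "nat \<Rightarrow> (nat \<Rightarrow> nat \<Rightarrow> complex) \<Rightarrow> (nat \<Rightarrow> nat \<Rightarrow> complex) \<Rightarrow> nat \<Rightarrow> nat \<Rightarrow> complex" where
  "mmul n A B = (\<lambda>i j. \<Sum>k=1..n. A i k * B k j)"

definition madj :: "(nat \<Rightarrow> nat \<Rightarrow> complex) \<Rightarrow> nat \<Rightarrow> nat \<Rightarrow> complex" where
  "madj A = (\<lambda>i j. cnj (A j i))"

definition unitary_mat :: "nat \<Rightarrow> (nat \<Rightarrow> nat \<Rightarrow> complex) \<Rightarrow> bool" where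
  "unitary_mat n U \<longleftrightarrow>
     (\<forall>i\<in>{1..n}. \<forall>j\<in>{1..n}.
        mmul n U (madj U) i j = (if i = j then 1 else 0) \<and>
        mmul n (madj U) U i j = (if i = j then 1 else 0))"

definition unitarily_similar :: "nat \<Rightarrow> (nat \<Rightarrow> nat \<Rightarrow> complex) \<Rightarrow> (nat \<Rightarrow> nat \<Rightarrow> complex) \<Rightarrow> bool" where
  "unitarily_similar n X Y \<longleftrightarrow>
     (\<exists>U. unitary_mat n U \<and>
        (\<forall>i\<in>{1..n}. \<forall>j\<in>{1..n}. mmul n (mmul n U X) (madj U) i j = Y i j))"

definition rotationally_invariant :: "nat \<Rightarrow> (nat \<Rightarrow> nat \<Rightarrow> complex) \<Rightarrow> bool" where
  "rotationally_invariant n X \<longleftrightarrow>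
     (\<forall>\<theta>::real. unitarily_similar n X (\<lambda>i j. cis \<theta> * X i j))"

end

theory Submission
  imports Defs "HOL-Computational_Algebra.Polynomial"
begin


fun cp :: "nat \<Rightarrow> real poly" where
  "cp 0 = 1"
| "cp (Suc 0) = [:0, 2:]"
| "cp (Suc (Suc n)) = pCons 0 (smult 2 (cp (Suc n))) - cp n"

lemma poly_cp: "poly (cp n) x = chebU n x"
  by (induction n rule: cp.induct) (auto simp: algebra_simps)

lemma coeff_cp: "coeff (cp n) n = 2 ^ n \<and> (\<forall>k>n. coeff (cp n) k = 0)"
proof (induction n rule: cp.induct)
  case 1
  then show ?case by (auto simp: coeff_1 split: if_splits)
next
  case 2
  then show ?case by (auto simp: coeff_pCons split: nat.splits)
next
  case (3 n)
  show ?case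
  proof (intro conjI allI impI)
    show "coeff (cp (Suc (Suc n))) (Suc (Suc n)) = 2 ^ Suc (Suc n)"
      using 3 by simp
  next
    fix k assume "k > Suc (Suc n)"
    then obtain k' where "k = Suc k'" "k' > Suc n" by (cases k) auto
    then show "coeff (cp (Suc (Suc n))) k = 0" using 3 by simp
  qed
qed

definition Pp :: "nat \<Rightarrow> real poly" where
  "Pp m = cp m - cp (m - 1) - cp (m - 2)"

lemma poly_Pp: "poly (Pp m) x = P m x"
  by (simp add: Pp_def P_def poly_cp)

lemma Pp_nz: assumes "m \<ge> 2" shows "Pp m \<noteq> 0"
proof -
  have "coeff (Pp m) m = 2 ^ m"
    using coeff_cp[of m] coeff_cp[of "m-1"] coeff_cp[of "m-2"] assms
    by (simp add: Pp_def)
  then show ?thesis by auto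
qed

lemma finite_roots: assumes "m \<ge> 2" shows "finite {x. P m x = 0}"
  using poly_roots_finite[OF Pp_nz[OF assms]] by (simp add: poly_Pp)

lemma chebU_1': "u = 1 \<Longrightarrow> chebU n u = real n + 1"
  by (induction n u rule: chebU.induct) auto
lemma chebU_1: "chebU n 1 = real n + 1" using chebU_1' by simp

lemma chebU_2': "u = 2 \<Longrightarrow> chebU (Suc n) u \<ge> 3 * chebU n u \<and> chebU n u \<ge> 1"
  by (induction n u rule: chebU.induct) auto
lemma chebU_2: "chebU (Suc n) 2 \<ge> 3 * chebU n 2 \<and> chebU n 2 \<ge> 1" using chebU_2' by blast

lemma root_exists: assumes "m \<ge> 2" shows "\<exists>x. 1 \<le> x \<and> P m x = 0"
proof -
  obtain k where k: "m = Suc (Suc k)" using assms by (cases m; cases "m - 1") auto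
  have a: "P m 1 \<le> 0" using assms by (simp add: P_def chebU_1)
  have "chebU (Suc (Suc k)) 2 \<ge> 3 * chebU (Suc k) 2" "chebU (Suc k) 2 \<ge> 3 * chebU k 2"
       "chebU k 2 \<ge> 1"
    using chebU_2 by blast+
  then have b: "0 \<le> P m 2" using k by (simp add: P_def)
  have "continuous_on {1..2} (\<lambda>x. poly (Pp m) x)"
    by (intro continuous_intros)
  then have "continuous_on {1..2} (P m)" by (simp add: poly_Pp)
  from IVT'[of "P m" 1 0 2, OF a b _ this] show ?thesis by auto
qed

lemma lam_ge1: assumes "m \<ge> 2" shows "lam m \<ge> 1"
proof -
  obtain x where "1 \<le> x" "P m x = 0" using root_exists[OF assms] by blast
  then show ?thesis unfolding lam_def
    using Max_ge[OF finite_roots[OF assms], of x] by auto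
qed

lemma chebU_mono: assumes "x \<ge> 1"
  shows "chebU (Suc n) x - chebU n x \<ge> 1 \<and> chebU n x \<ge> 1"
proof (induction n rule: nat_less_induct)
  case (1 n)
  show ?case
  proof (cases n)
    case 0 then show ?thesis using assms by simp
  next
    case (Suc k)
    then have IH: "chebU (Suc k) x - chebU k x \<ge> 1" "chebU k x \<ge> 1" using 1 by auto
    have "(2 * x - 2) * chebU (Suc k) x \<ge> 0" using IH assms by simp
    then have h: "2 * x * chebU (Suc k) x \<ge> 2 * chebU (Suc k) x" by (simp add: algebra_simps)
    have "chebU (Suc (Suc k)) x = 2 * x * chebU (Suc k) x - chebU k x" by simp
    then show ?thesis using IH h unfolding Suc by linarith
  qed
qed



lemma split_sum:
  "(\<Sum>k=1..2*Suc n. f k) = (\<Sum>j<n. f (j+1)) + f (n+1) + f (n+2) + (\<Sum>j<n. f (2*n+2-j))"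
proof -
  have "(\<Sum>k=1..2*Suc n. f k) = (\<Sum>k=1..n + (n+2). f k)" by (rule arg_cong[where f="\<lambda>x. sum f {1..x}"]) simp
  also have "\<dots> = (\<Sum>k=1..n. f k) + (\<Sum>k=n+1..n+(n+2). f k)"
    by (rule sum.ub_add_nat) simp
  also have "(\<Sum>k=n+1..n+(n+2). f k) = (\<Sum>k=n+1..(n+2)+n. f k)" by (simp add: algebra_simps)
  also have "\<dots> = (\<Sum>k=n+1..n+2. f k) + (\<Sum>k=n+2+1..n+2+n. f k)"
    by (rule sum.ub_add_nat) simp
  also have "(\<Sum>k=n+1..n+2. f k) = f (n+1) + f (n+2)"
    by (simp add: numeral_2_eq_2)
  also have "(\<Sum>k=n+2+1..n+2+n. f k) = (\<Sum>j<n. f (2*n+2-j))"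
    by (rule sum.reindex_bij_witness[of _ "\<lambda>k. 2*n+2-k" "\<lambda>j. 2*n+2-j"]) auto
  also have "(\<Sum>k=1..n. f k) = (\<Sum>j<n. f (j+1))"
    using sum.atLeast1_atMost_eq[of f n] by simp
  finally show ?thesis by (simp only: add.assoc)
qed



lemma eta_val: "eta = Complex (sqrt 2 / 2) (- (sqrt 2 / 2))"
  unfolding eta_def by (simp add: complex_eq_iff cos_45 sin_45)

lemma s2sq: "sqrt 2 * sqrt 2 = (2::real)" by simp

lemma eta_cnj: "eta * cnj eta = 1"
  by (simp add: eta_val complex_eq_iff power2_eq_square) 

lemma eta_i: "eta * \<i> = cnj eta"
  by (simp add: eta_val complex_eq_iff)

lemma eta2: "eta ^ 2 = - \<i>"
  by (simp add: eta_val complex_eq_iff power2_eq_square)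

lemma eta4: "eta ^ 4 = - 1"
proof -
  have "eta ^ 4 = (eta ^ 2) ^ 2" by (simp flip: power_mult)
  then show ?thesis by (simp add: eta2)
qed

lemma eta3: "eta ^ 3 = Complex (- (sqrt 2 / 2)) (- (sqrt 2 / 2))"
proof -
  have "eta ^ 3 = eta ^ 2 * eta" by (simp add: power_Suc2 numeral_3_eq_3 numeral_2_eq_2)
  also have "\<dots> = - \<i> * eta" by (simp add: eta2)
  finally show ?thesis by (simp add: eta_val complex_eq_iff)
qed

lemma cmod_eta: "cmod eta = 1"
  by (simp add: eta_val cmod_def power2_eq_square)

lemma alpha_prop: "cnj alpha * (1 + cnj eta) = 1"
proof -
  have "1 + cnj eta \<noteq> 0" by (simp add: eta_val complex_eq_iff)
  then show ?thesis unfolding alpha_def by (simp add: field_simps)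
qed

lemma alpha_beta: "alpha * cnj betac * (1 + cnj eta) = 1 / sqrt 2"
proof -
  have nz: "1 + eta \<noteq> 0" by (simp add: eta_val complex_eq_iff)
  have "cnj betac * (1 + cnj eta) = (1 + eta) / sqrt 2"
    by (simp add: eta_val betac_def complex_eq_iff field_simps)
  then show ?thesis unfolding alpha_def using nz by (simp add: field_simps)
qed

lemma cmod_betac: "cmod betac ^ 2 = 1/2"
  by (simp add: betac_def cmod_def power2_eq_square)

lemma qc_val: "qc = complex_of_real (sqrt 2 - 1) * eta"
  unfolding qc_def eta_def ..



definition sv :: "nat \<Rightarrow> real" where "sv t = - Im (eta ^ t)"
definition Ps :: "nat \<Rightarrow> real" where "Ps t = (\<Sum>k=1..t. sv k)"

lemma sv4: "sv (k + 4) = - sv k"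
  unfolding sv_def by (simp add: power_add eta4)

lemma Ps_Suc: "Ps (Suc t) = Ps t + sv (Suc t)"
  unfolding Ps_def by simp

lemma Ps_period: "Ps (t + 4) + Ps t = Ps 4"
proof (induction t)
  case 0 then show ?case by (simp add: Ps_def)
next
  case (Suc t)
  have "Ps (Suc t + 4) + Ps (Suc t) = (Ps (t + 4) + Ps t) + (sv (t + 1 + 4) + sv (Suc t))"
    using Ps_Suc[of "t+4"] Ps_Suc[of t] by simp
  also have "sv (t + 1 + 4) + sv (Suc t) = 0" using sv4[of "t+1"] by simp
  finally show ?case using Suc by simp
qed

lemma sv_vals: "sv 1 = sqrt 2 / 2" "sv 2 = 1" "sv 3 = sqrt 2 / 2" "sv 4 = 0"
  unfolding sv_def by (simp_all only: power_one_right eta2 eta3 eta4) (simp_all add: eta_val)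

lemma Ps_vals: "Ps 0 = 0" "Ps 1 = sqrt 2 / 2" "Ps 2 = 1 + sqrt 2 / 2" "Ps 3 = 1 + sqrt 2"
  "Ps 4 = 1 + sqrt 2"
proof -
  show a: "Ps 0 = 0" by (simp add: Ps_def)
  show b: "Ps 1 = sqrt 2 / 2" using Ps_Suc[of 0] a sv_vals by simp
  show c: "Ps 2 = 1 + sqrt 2 / 2" using Ps_Suc[of 1] b sv_vals by (simp add: numeral_2_eq_2)
  show d: "Ps 3 = 1 + sqrt 2" using Ps_Suc[of 2] c sv_vals by (simp add: numeral_3_eq_3)
  show "Ps 4 = 1 + sqrt 2" using Ps_Suc[of 3] d sv_vals by (simp add: eval_nat_numeral)
qed

lemma Ps_nonneg: "0 \<le> Ps t \<and> Ps t \<le> Ps 4"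
proof (induction t rule: less_induct)
  case (less t)
  show ?case
  proof (cases "t < 4")
    case True
    then have "t = 0 \<or> t = 1 \<or> t = 2 \<or> t = 3" by auto
    moreover have h: "sqrt 2 \<ge> (0::real)" by simp
    ultimately show ?thesis
      by (elim disjE; (hypsubst, simp only: Ps_vals, insert h, linarith))
  next
    case False
    then obtain r where r: "t = r + 4" by (metis add.commute le_Suc_ex not_less)
    then have "Ps t = Ps 4 - Ps r" using Ps_period[of r] by simp
    moreover have "0 \<le> Ps r \<and> Ps r \<le> Ps 4" using less r by simp
    ultimately show ?thesis by simp
  qed
qed

lemma abel_aux:
  fixes g :: "nat \<Rightarrow> real"
  assumes dec: "\<And>t. 1 \<le> t \<Longrightarrow> t < n \<Longrightarrow> g (t+1) \<le> g t"
    and nn: "\<And>t. 1 \<le> t \<Longrightarrow> t \<le> n \<Longrightarrow> 0 \<le> g t"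
  shows "(\<Sum>t=1..n. g t * sv t) \<ge> g n * Ps n"
  using assms
proof (induction n)
  case 0 then show ?case by (simp add: Ps_def)
next
  case (Suc n)
  have IH: "(\<Sum>t=1..n. g t * sv t) \<ge> g n * Ps n" using Suc by auto
  have "g n * Ps n \<ge> g (Suc n) * Ps n"
  proof (cases "n = 0")
    case True then show ?thesis by (simp add: Ps_def)
  next
    case False
    then show ?thesis using Suc.prems(1)[of n] Ps_nonneg[of n] by (simp add: mult_right_mono)
  qed
  then show ?case using IH by (simp add: Ps_Suc algebra_simps)
qed

lemma abel:
  fixes g :: "nat \<Rightarrow> real"
  assumes "n \<ge> 1"
    and dec: "\<And>t. 1 \<le> t \<Longrightarrow> t < n \<Longrightarrow> g (t+1) \<le> g t"
    and nn: "\<And>t. 1 \<le> t \<Longrightarrow> t \<le> n \<Longrightarrow> 0 \<le> g t"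
    and g2: "0 \<le> g 2" and strict: "g 2 < g 1"
  shows "(\<Sum>t=1..n. g t * sv t) > 0"
proof -
  define h where "h t = (if t = 1 then g 2 else g t)" for t
  have "(\<Sum>t=1..n. h t * sv t) \<ge> h n * Ps n"
    by (rule abel_aux) (use dec nn g2 in \<open>auto simp: h_def numeral_2_eq_2\<close>)
  moreover have "h n * Ps n \<ge> 0"
    using nn[of n] g2 assms(1) Ps_nonneg[of n] by (auto simp: h_def)
  moreover have "(\<Sum>t=1..n. g t * sv t) = (\<Sum>t=1..n. h t * sv t) + (g 1 - g 2) * sv 1"
  proof -
    have "(\<Sum>t=1..n. g t * sv t) = (\<Sum>t=1..n. h t * sv t + (if t = 1 then (g 1 - g 2) * sv 1 else 0))"
      by (rule sum.cong) (auto simp: h_def algebra_simps)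
    also have "\<dots> = (\<Sum>t=1..n. h t * sv t) + (g 1 - g 2) * sv 1"
      using assms(1) by (simp add: sum.distrib)
    finally show ?thesis .
  qed
  moreover have "sv 1 > 0" unfolding sv_vals(1) by simp
  then have "(g 1 - g 2) * sv 1 > 0" using strict by simp
  ultimately show ?thesis by linarith
qed



lemma cnj_Uv[simp]: "cnj (Uv m j) = Uv m j"
  by (simp add: Uv_def)

lemma Uv_sq: "Uv m j * Uv m j = complex_of_real ((chebU j (lam m))\<^sup>2)"
  by (simp add: Uv_def power2_eq_square)

lemma eta_pow_cnj1: "b \<le> a \<Longrightarrow> eta ^ a * cnj eta ^ b = eta ^ (a - b)"
proof -
  assume "b \<le> a"
  then have "eta ^ a = eta ^ (a - b) * eta ^ b" by (simp flip: power_add)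
  then have "eta ^ a * cnj eta ^ b = eta ^ (a - b) * (eta * cnj eta) ^ b"
    by (simp add: power_mult_distrib)
  then show ?thesis by (simp add: eta_cnj)
qed

lemma eta_pow_cnj2: "a \<le> b \<Longrightarrow> eta ^ a * cnj eta ^ b = cnj eta ^ (b - a)"
proof -
  assume "a \<le> b"
  then have "cnj eta ^ b = cnj eta ^ (b - a) * cnj eta ^ a" by (simp flip: power_add)
  then have "eta ^ a * cnj eta ^ b = cnj eta ^ (b - a) * (eta * cnj eta) ^ a"
    by (simp add: power_mult_distrib)
  then show ?thesis by (simp add: eta_cnj)
qed

context
  fixes n :: nat
  assumes n1: "n \<ge> 1"
begin

lemma v0_vals:
  "j < n \<Longrightarrow> v0 (Suc n) (Suc j) = Uv (Suc n) j"
  "v0 (Suc n) (Suc n) = Uv (Suc n) n / 2"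
  "v0 (Suc n) (Suc (Suc n)) = Uv (Suc n) n / 2"
  "j < n \<Longrightarrow> v0 (Suc n) (Suc (Suc (2*n)) - j) = 0"
  unfolding v0_def by auto

lemma v4_vals:
  "j < n \<Longrightarrow> v4 (Suc n) (Suc j) = eta ^ j * Uv (Suc n) j"
  "v4 (Suc n) (Suc n) = eta ^ n * alpha * Uv (Suc n) n"
  "v4 (Suc n) (Suc (Suc n)) = eta ^ (Suc n) * alpha * Uv (Suc n) n"
  "j < n \<Longrightarrow> v4 (Suc n) (Suc (Suc (2*n)) - j) = eta ^ (2*n+1-j) * qc * Uv (Suc n) j"
  unfolding v4_def by auto

lemma v2_vals:
  "j < n \<Longrightarrow> v2 (Suc n) (Suc j) = (-\<i>) ^ j * Uv (Suc n) j"
  "v2 (Suc n) (Suc n) = (-\<i>) ^ n * betac * Uv (Suc n) n"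
  "v2 (Suc n) (Suc (Suc n)) = (-\<i>) ^ (Suc n) * betac * Uv (Suc n) n"
  "j < n \<Longrightarrow> v2 (Suc n) (Suc (Suc (2*n)) - j) = (-\<i>) ^ (2*n+1-j) * Uv (Suc n) j"
  unfolding v2_def by auto

definition uu :: "nat \<Rightarrow> real" where "uu j = chebU j (lam (Suc n))"
definition SS :: complex where "SS = (\<Sum>j<n. complex_of_real ((uu j)\<^sup>2) * eta ^ (n - j))"

lemma UvS: "Uv (Suc n) j * Uv (Suc n) j = complex_of_real ((uu j)\<^sup>2)"
  by (simp add: Uv_sq uu_def)

lemma I1: "eta ^ n * cinner (2 * Suc n) (v0 (Suc n)) (v4 (Suc n)) = SS + complex_of_real ((uu n)\<^sup>2 / 2)"
proof -
  let ?U = "Uv (Suc n)"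
  have front: "(\<Sum>j<n. v0 (Suc n) (j+1) * cnj (v4 (Suc n) (j+1)))
       = (\<Sum>j<n. complex_of_real ((uu j)\<^sup>2) * cnj eta ^ j)"
  proof (rule sum.cong[OF refl])
    fix j assume "j \<in> {..<n}"
    then have "v0 (Suc n) (j+1) * cnj (v4 (Suc n) (j+1)) = cnj eta ^ j * (?U j * ?U j)"
      by (simp add: v0_vals v4_vals)
    then show "v0 (Suc n) (j+1) * cnj (v4 (Suc n) (j+1)) = complex_of_real ((uu j)\<^sup>2) * cnj eta ^ j"
      by (simp add: UvS)
  qed
  have bk: "(\<Sum>j<n. v0 (Suc n) (2*n+2-j) * cnj (v4 (Suc n) (2*n+2-j))) = 0"
    by (rule sum.neutral) (simp add: v0_vals)
  have mid: "v0 (Suc n) (n+1) * cnj (v4 (Suc n) (n+1)) + v0 (Suc n) (n+2) * cnj (v4 (Suc n) (n+2))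
      = complex_of_real ((uu n)\<^sup>2) / 2 * cnj eta ^ n * (cnj alpha * (1 + cnj eta))"
  proof -
    have "v0 (Suc n) (n+1) * cnj (v4 (Suc n) (n+1)) + v0 (Suc n) (n+2) * cnj (v4 (Suc n) (n+2))
      = (?U n * ?U n) / 2 * cnj eta ^ n * (cnj alpha * (1 + cnj eta))"
      by (simp add: v0_vals v4_vals) (simp add: algebra_simps)
    then show ?thesis by (simp add: UvS)
  qed
  have "cinner (2 * Suc n) (v0 (Suc n)) (v4 (Suc n)) =
     (\<Sum>j<n. complex_of_real ((uu j)\<^sup>2) * cnj eta ^ j) + complex_of_real ((uu n)\<^sup>2) / 2 * cnj eta ^ n"
    unfolding cinner_def split_sum[of "\<lambda>k. v0 (Suc n) k * cnj (v4 (Suc n) k)" n]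
    using front bk mid alpha_prop by simp
  then have "eta ^ n * cinner (2 * Suc n) (v0 (Suc n)) (v4 (Suc n)) =
     (\<Sum>j<n. complex_of_real ((uu j)\<^sup>2) * (eta ^ n * cnj eta ^ j)) + complex_of_real ((uu n)\<^sup>2) / 2 * (eta ^ n * cnj eta ^ n)"
    by (simp add: algebra_simps sum_distrib_left)
  also have "\<dots> = SS + complex_of_real ((uu n)\<^sup>2 / 2)"
    unfolding SS_def by (auto simp: eta_pow_cnj1 intro!: sum.cong)
  finally show ?thesis .
qed

lemma I2: "eta ^ n * cinner (2 * Suc n) (v4 (Suc n)) (v2 (Suc n)) =
   SS + complex_of_real (sqrt 2 * ((uu n)\<^sup>2 / 2)) + complex_of_real (sqrt 2 - 1) * cnj SS"
proof -
  let ?U = "Uv (Suc n)"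
  have front: "(\<Sum>j<n. v4 (Suc n) (j+1) * cnj (v2 (Suc n) (j+1)))
       = (\<Sum>j<n. complex_of_real ((uu j)\<^sup>2) * cnj eta ^ j)"
  proof (rule sum.cong[OF refl])
    fix j assume "j \<in> {..<n}"
    then have "v4 (Suc n) (j+1) * cnj (v2 (Suc n) (j+1)) = (eta * \<i>) ^ j * (?U j * ?U j)"
      by (simp add: v4_vals v2_vals) (simp add: power_mult_distrib algebra_simps)
    then show "v4 (Suc n) (j+1) * cnj (v2 (Suc n) (j+1)) = complex_of_real ((uu j)\<^sup>2) * cnj eta ^ j"
      by (simp add: UvS eta_i)
  qed
  have bk: "(\<Sum>j<n. v4 (Suc n) (2*n+2-j) * cnj (v2 (Suc n) (2*n+2-j)))
     = (\<Sum>j<n. complex_of_real ((uu j)\<^sup>2) * complex_of_real (sqrt 2 - 1) * (eta * cnj eta ^ (2*n+1-j)))"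
  proof (rule sum.cong[OF refl])
    fix j assume "j \<in> {..<n}"
    then have "v4 (Suc n) (2*n+2-j) * cnj (v2 (Suc n) (2*n+2-j)) = (eta * \<i>) ^ (2*n+1-j) * qc * (?U j * ?U j)"
      by (simp add: v4_vals v2_vals) (simp add: power_mult_distrib algebra_simps)
    then have "v4 (Suc n) (2*n+2-j) * cnj (v2 (Suc n) (2*n+2-j)) = cnj eta ^ (2*n+1-j) * qc * complex_of_real ((uu j)\<^sup>2)"
      by (simp only: UvS eta_i)
    then show "v4 (Suc n) (2*n+2-j) * cnj (v2 (Suc n) (2*n+2-j)) = 
       complex_of_real ((uu j)\<^sup>2) * complex_of_real (sqrt 2 - 1) * (eta * cnj eta ^ (2*n+1-j))"
      by (simp add: qc_val algebra_simps)
  qed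
  have mid: "v4 (Suc n) (n+1) * cnj (v2 (Suc n) (n+1)) + v4 (Suc n) (n+2) * cnj (v2 (Suc n) (n+2))
      = complex_of_real ((uu n)\<^sup>2) * cnj eta ^ n * (alpha * cnj betac * (1 + cnj eta))"
  proof -
    have "v4 (Suc n) (n+1) * cnj (v2 (Suc n) (n+1)) + v4 (Suc n) (n+2) * cnj (v2 (Suc n) (n+2))
      = (?U n * ?U n) * (eta * \<i>) ^ n * (alpha * cnj betac * (1 + eta * \<i>))"
      by (simp add: v4_vals v2_vals) (simp add: power_mult_distrib algebra_simps)
    then show ?thesis by (simp add: UvS eta_i)
  qed
  have "cinner (2 * Suc n) (v4 (Suc n)) (v2 (Suc n)) =
     (\<Sum>j<n. complex_of_real ((uu j)\<^sup>2) * cnj eta ^ j) + complex_of_real ((uu n)\<^sup>2) * cnj eta ^ n / sqrt 2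
     + (\<Sum>j<n. complex_of_real ((uu j)\<^sup>2) * complex_of_real (sqrt 2 - 1) * (eta * cnj eta ^ (2*n+1-j)))"
    unfolding cinner_def split_sum[of "\<lambda>k. v4 (Suc n) k * cnj (v2 (Suc n) k)" n]
    using front bk mid alpha_beta by simp
  then have "eta ^ n * cinner (2 * Suc n) (v4 (Suc n)) (v2 (Suc n)) =
     (\<Sum>j<n. complex_of_real ((uu j)\<^sup>2) * (eta ^ n * cnj eta ^ j)) + complex_of_real ((uu n)\<^sup>2) * (eta ^ n * cnj eta ^ n) / sqrt 2
     + (\<Sum>j<n. complex_of_real ((uu j)\<^sup>2) * complex_of_real (sqrt 2 - 1) * (eta ^ Suc n * cnj eta ^ (2*n+1-j)))"
    by (simp add: algebra_simps sum_distrib_left)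
  also have "\<dots> = SS + complex_of_real (sqrt 2 * ((uu n)\<^sup>2 / 2)) + complex_of_real (sqrt 2 - 1) * cnj SS"
  proof -
    have a: "(\<Sum>j<n. complex_of_real ((uu j)\<^sup>2) * (eta ^ n * cnj eta ^ j)) = SS"
      unfolding SS_def by (auto simp: eta_pow_cnj1 intro!: sum.cong)
    have b: "(\<Sum>j<n. complex_of_real ((uu j)\<^sup>2) * complex_of_real (sqrt 2 - 1) * (eta ^ Suc n * cnj eta ^ (2*n+1-j)))
       = complex_of_real (sqrt 2 - 1) * cnj SS"
    proof -
      have e: "eta ^ Suc n * cnj eta ^ (Suc (2*n)-j) = cnj eta ^ (n-j)" if "j < n" for j
        using eta_pow_cnj2[of "Suc n" "2*n+1-j"] that by (simp add: numeral_2_eq_2)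
      have "(\<Sum>j<n. complex_of_real ((uu j)\<^sup>2) * complex_of_real (sqrt 2 - 1) * (eta ^ Suc n * cnj eta ^ (2*n+1-j)))
         = (\<Sum>j<n. complex_of_real (sqrt 2 - 1) * (complex_of_real ((uu j)\<^sup>2) * cnj eta ^ (n-j)))"
        by (rule sum.cong[OF refl]) (simp del: power_Suc add: e)
      also have "\<dots> = complex_of_real (sqrt 2 - 1) * cnj SS"
        unfolding SS_def by (simp add: sum_distrib_left)
      finally show ?thesis .
    qed
    have c: "complex_of_real ((uu n)\<^sup>2) * (eta ^ n * cnj eta ^ n) / sqrt 2 = complex_of_real (sqrt 2 * ((uu n)\<^sup>2 / 2))"
    proof -
      have "complex_of_real (sqrt 2) * complex_of_real (sqrt 2) = 2"
        by (simp flip: of_real_mult)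
      then show ?thesis by (simp add: eta_pow_cnj1 field_simps)
    qed
    show ?thesis using a b c by simp
  qed
  finally show ?thesis .
qed

end



context
  fixes n :: nat
  assumes n1: "n \<ge> 1"
begin

lemma uu_mono: "uu n (Suc k) \<ge> uu n k + 1 \<and> uu n k \<ge> 1"
proof -
  have "lam (Suc n) \<ge> 1" using lam_ge1[of "Suc n"] n1 by simp
  from chebU_mono[OF this, of k] show ?thesis unfolding uu_def[OF n1] by simp
qed

lemma uu_ge1: "uu n k \<ge> 1" using uu_mono by blast

lemma Uv_uu: "Uv (Suc n) j = complex_of_real (uu n j)"
  by (simp add: Uv_def uu_def[OF n1])

lemma cmod_Uv2: "(cmod (Uv (Suc n) j))\<^sup>2 = (uu n j)\<^sup>2"
  by (simp add: Uv_uu)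

lemma NS0: "(\<Sum>k=1..2*Suc n. (cmod (v0 (Suc n) k))\<^sup>2) = (\<Sum>j<n. (uu n j)\<^sup>2) + (uu n n)\<^sup>2 / 2"
proof -
  have f: "(\<Sum>j<n. (cmod (v0 (Suc n) (j+1)))\<^sup>2) = (\<Sum>j<n. (uu n j)\<^sup>2)"
    by (rule sum.cong[OF refl]) (simp add: v0_vals[OF n1] cmod_Uv2)
  have b: "(\<Sum>j<n. (cmod (v0 (Suc n) (2*n+2-j)))\<^sup>2) = 0"
    by (rule sum.neutral) (simp add: v0_vals[OF n1])
  have m: "(cmod (v0 (Suc n) (n+1)))\<^sup>2 + (cmod (v0 (Suc n) (n+2)))\<^sup>2 = (uu n n)\<^sup>2 / 2"
    by (simp add: v0_vals[OF n1] norm_divide power_divide cmod_Uv2)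
  show ?thesis unfolding split_sum[of "\<lambda>k. (cmod (v0 (Suc n) k))\<^sup>2" n] using f b m by simp
qed

lemma NS2: "(\<Sum>k=1..2*Suc n. (cmod (v2 (Suc n) k))\<^sup>2) = 2 * (\<Sum>j<n. (uu n j)\<^sup>2) + (uu n n)\<^sup>2"
proof -
  have f: "(\<Sum>j<n. (cmod (v2 (Suc n) (j+1)))\<^sup>2) = (\<Sum>j<n. (uu n j)\<^sup>2)"
    by (rule sum.cong[OF refl]) (simp add: v2_vals[OF n1] norm_mult norm_power cmod_Uv2)
  have b: "(\<Sum>j<n. (cmod (v2 (Suc n) (2*n+2-j)))\<^sup>2) = (\<Sum>j<n. (uu n j)\<^sup>2)"
    by (rule sum.cong[OF refl]) (simp add: v2_vals[OF n1] norm_mult norm_power cmod_Uv2)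
  have m: "(cmod (v2 (Suc n) (n+1)))\<^sup>2 + (cmod (v2 (Suc n) (n+2)))\<^sup>2 = (uu n n)\<^sup>2"
    using cmod_betac by (simp add: v2_vals[OF n1] norm_mult norm_power power_mult_distrib cmod_Uv2)
  show ?thesis unfolding split_sum[of "\<lambda>k. (cmod (v2 (Suc n) k))\<^sup>2" n] using f b m by simp
qed

lemma v4_pos: "(\<Sum>k=1..2*Suc n. (cmod (v4 (Suc n) k))\<^sup>2) \<ge> 1"
proof -
  have "(cmod (v4 (Suc n) 1))\<^sup>2 \<le> (\<Sum>k=1..2*Suc n. (cmod (v4 (Suc n) k))\<^sup>2)"
    by (rule member_le_sum) auto
  moreover have "(cmod (v4 (Suc n) 1))\<^sup>2 = (uu n 0)\<^sup>2"
    using v4_vals(1)[OF n1, of 0] n1 by (simp add: cmod_Uv2)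
  moreover have "(uu n 0)\<^sup>2 \<ge> 1" using uu_ge1[of 0] by (simp add: one_le_power)
  ultimately show ?thesis by linarith
qed

lemma ImSS: "Im (SS n) < 0"
proof -
  define g where "g t = (if t \<le> n then (uu n (n - t))\<^sup>2 else 0)" for t
  have "Im (SS n) = (\<Sum>j<n. (uu n j)\<^sup>2 * Im (eta ^ (n - j)))"
    unfolding SS_def[OF n1] by (simp add: Im_sum)
  also have "\<dots> = - (\<Sum>j<n. (uu n j)\<^sup>2 * sv (n - j))"
    by (simp add: sv_def sum_negf)
  also have "(\<Sum>j<n. (uu n j)\<^sup>2 * sv (n - j)) = (\<Sum>t=1..n. g t * sv t)"
    by (rule sum.reindex_bij_witness[of _ "\<lambda>t. n - t" "\<lambda>j. n - j"]) (auto simp: g_def)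
  finally have eq: "Im (SS n) = - (\<Sum>t=1..n. g t * sv t)" .
  have "(\<Sum>t=1..n. g t * sv t) > 0"
  proof (rule abel)
    show "1 \<le> n" by (rule n1)
    show "g (t + 1) \<le> g t" if "1 \<le> t" "t < n" for t
    proof -
      have "n - t = Suc (n - (t+1))" using that by simp
      then have "uu n (n - (t+1)) \<le> uu n (n - t)" using uu_mono[of "n - (t+1)"] by simp
      moreover have "0 \<le> uu n (n - (t+1))" using uu_ge1[of "n - (t+1)"] by simp
      ultimately show ?thesis using that by (simp add: g_def power_mono)
    qed
    show "0 \<le> g t" for t by (simp add: g_def)
    show "0 \<le> g 2" by (simp add: g_def)
    show "g 2 < g 1"
    proof (cases "n \<ge> 2")
      case True
      have "n - 1 = Suc (n - 2)" using True by simp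
      then have "uu n (n - 2) < uu n (n - 1)" using uu_mono[of "n - 2"] by simp
      moreover have "0 \<le> uu n (n - 2)" using uu_ge1[of "n - 2"] by simp
      ultimately show ?thesis using True n1 by (simp add: g_def power_strict_mono)
    next
      case False
      then have "n = 1" using n1 by simp
      then show ?thesis using uu_ge1[of 0] by (simp add: g_def)
    qed
  qed
  then show ?thesis using eq by linarith
qed

end



lemma mmul_assoc: "mmul n (mmul n A B) C = mmul n A (mmul n B C)"
  unfolding mmul_def
  by (auto simp: sum_distrib_left sum_distrib_right mult.assoc intro!: ext sum.swap[THEN trans])

lemma madj_mmul: "madj (mmul n A B) = mmul n (madj B) (madj A)"
  unfolding mmul_def madj_def by (auto intro!: ext sum.cong simp: mult.commute)

lemma madj_madj[simp]: "madj (madj A) = A"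
  unfolding madj_def by auto

lemma box_id_left:
  assumes "\<forall>k\<in>{1..n}. \<forall>l\<in>{1..n}. Q k l = (if k = l then 1 else 0)"
  shows "mmul n A (mmul n Q R) = mmul n A R"
proof -
  have "mmul n Q R k j = R k j" if "k \<in> {1..n}" for k j
  proof -
    have "(\<Sum>l=1..n. Q k l * R l j) = (\<Sum>l=1..n. if l = k then R l j else 0)"
      by (rule sum.cong) (use assms that in auto)
    then show ?thesis using that unfolding mmul_def by simp
  qed
  then show ?thesis unfolding mmul_def by (auto intro!: ext sum.cong)
qed

lemma unitary_cancel:
  assumes "unitary_mat n U"
  shows "mmul n A (mmul n (madj U) (mmul n U R)) = mmul n A R"
proof -
  have "mmul n (madj U) (mmul n U R) = mmul n (mmul n (madj U) U) R"
    by (simp add: mmul_assoc)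
  moreover have "mmul n A (mmul n (mmul n (madj U) U) R) = mmul n A R"
    by (rule box_id_left) (use assms in \<open>auto simp: unitary_mat_def\<close>)
  ultimately show ?thesis by simp
qed

definition tr :: "nat \<Rightarrow> (nat \<Rightarrow> nat \<Rightarrow> complex) \<Rightarrow> complex" where
  "tr n A = (\<Sum>i=1..n. A i i)"

lemma tr_comm: "tr n (mmul n A B) = tr n (mmul n B A)"
  unfolding tr_def mmul_def by (subst sum.swap) (simp add: mult.commute)

lemma tr_id:
  assumes "\<forall>k\<in>{1..n}. \<forall>l\<in>{1..n}. Q k l = (if k = l then 1 else 0)"
  shows "tr n (mmul n A Q) = tr n A"
proof -
  have "(\<Sum>k=1..n. A i k * Q k i) = A i i" if "i \<in> {1..n}" for i
  proof -
    have "(\<Sum>k=1..n. A i k * Q k i) = (\<Sum>k=1..n. if k = i then A i k else 0)"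
      by (rule sum.cong) (use assms that in auto)
    then show ?thesis using that by simp
  qed
  then show ?thesis unfolding tr_def mmul_def by (auto intro!: sum.cong)
qed

definition Wm :: "nat \<Rightarrow> (nat \<Rightarrow> nat \<Rightarrow> complex) \<Rightarrow> nat \<Rightarrow> nat \<Rightarrow> complex" where
  "Wm n A = mmul n (mmul n A A) (madj A)"

definition Tm :: "nat \<Rightarrow> (nat \<Rightarrow> nat \<Rightarrow> complex) \<Rightarrow> complex" where
  "Tm n A = tr n (mmul n (Wm n A) (Wm n A))"

lemma Tm_unitary:
  assumes "unitary_mat n U"
  shows "Tm n (mmul n (mmul n U X) (madj U)) = Tm n X"
proof -
  note c = unitary_cancel[OF assms]
  let ?Z = "mmul n (mmul n U X) (madj U)"
  have "Wm n ?Z = mmul n U (mmul n (Wm n X) (madj U))"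
    unfolding Wm_def madj_mmul by (simp add: mmul_assoc c)
  then have "mmul n (Wm n ?Z) (Wm n ?Z) = mmul n U (mmul n (mmul n (Wm n X) (Wm n X)) (madj U))"
    by (simp add: mmul_assoc c)
  then have "Tm n ?Z = tr n (mmul n (mmul n (mmul n (Wm n X) (Wm n X)) (madj U)) U)"
    unfolding Tm_def by (simp add: tr_comm)
  also have "\<dots> = tr n (mmul n (mmul n (Wm n X) (Wm n X)) (mmul n (madj U) U))"
    by (simp add: mmul_assoc)
  also have "\<dots> = Tm n X" unfolding Tm_def
    by (rule tr_id) (use assms in \<open>auto simp: unitary_mat_def\<close>)
  finally show ?thesis .
qed

lemma Tm_cong:
  assumes "\<forall>i\<in>{1..n}. \<forall>j\<in>{1..n}. A i j = B i j"
  shows "Tm n A = Tm n B"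
proof -
  have m: "\<forall>i\<in>{1..n}. \<forall>j\<in>{1..n}. mmul n F G i j = mmul n F' G' i j"
    if "\<forall>i\<in>{1..n}. \<forall>j\<in>{1..n}. F i j = F' i j" "\<forall>i\<in>{1..n}. \<forall>j\<in>{1..n}. G i j = G' i j"
    for F G F' G' :: "nat \<Rightarrow> nat \<Rightarrow> complex"
    using that unfolding mmul_def by auto
  have a: "\<forall>i\<in>{1..n}. \<forall>j\<in>{1..n}. madj A i j = madj B i j"
    using assms unfolding madj_def by auto
  have "\<forall>i\<in>{1..n}. \<forall>j\<in>{1..n}. Wm n A i j = Wm n B i j"
    unfolding Wm_def by (intro m assms a)
  then have "\<forall>i\<in>{1..n}. \<forall>j\<in>{1..n}. mmul n (Wm n A) (Wm n A) i j = mmul n (Wm n B) (Wm n B) i j"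
    by (intro m)
  then show ?thesis unfolding Tm_def tr_def by auto
qed

lemma Tm_scale:
  "Tm n (\<lambda>i j. \<i> * X i j) = - Tm n X"
proof -
  have "Wm n (\<lambda>i j. \<i> * X i j) = (\<lambda>i j. \<i> * Wm n X i j)"
    unfolding Wm_def mmul_def madj_def
    by (auto intro!: ext simp: sum_distrib_left sum_distrib_right algebra_simps)
  then show ?thesis unfolding Tm_def mmul_def tr_def
    by (simp add: sum_distrib_left sum_distrib_right algebra_simps sum_negf flip: sum.distrib)
qed



lemma sum_single:
  assumes "finite A" "\<And>k. k \<in> A \<Longrightarrow> k \<noteq> a \<Longrightarrow> f k = 0"
  shows "sum f A = (if a \<in> A then f a else 0)"
proof -
  have "sum f A = (\<Sum>k\<in>A. if k = a then f k else 0)"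
    by (rule sum.cong) (use assms in auto)
  then show ?thesis using assms by simp
qed

lemma sum_nz_ex: "sum f A \<noteq> 0 \<Longrightarrow> \<exists>k\<in>A. f k \<noteq> 0"
proof (rule ccontr)
  assume "sum f A \<noteq> 0" "\<not> (\<exists>k\<in>A. f k \<noteq> 0)"
  then show False using sum.neutral[of A f] by auto
qed

lemma Cnz: "Cmat m i j \<noteq> 0 \<Longrightarrow> m \<ge> 2 \<Longrightarrow> j = i + 1 \<or> j = i + 2"
  unfolding Cmat_def Jblock_def Emat_def by (auto split: if_splits)

lemma C1: "m \<ge> 2 \<Longrightarrow> Cmat m i (i+1) = (if 1 \<le> i \<and> i < 2 * m then 1 else 0)"
  unfolding Cmat_def Jblock_def Emat_def by auto

lemma C2: "m \<ge> 2 \<Longrightarrow> Cmat m i (i+2) = (if i = m - 1 then 1 else 0) - (if i = m then 1 else 0)"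
  unfolding Cmat_def Jblock_def Emat_def by auto

lemma CCnz:
  assumes "m \<ge> 2" "mmul n (Cmat m) (Cmat m) i k \<noteq> 0"
  shows "i + 2 \<le> k"
proof -
  obtain l where "Cmat m i l * Cmat m l k \<noteq> 0"
    using sum_nz_ex[OF assms(2)[unfolded mmul_def]] by auto
  then show ?thesis using Cnz[of m i l] Cnz[of m l k] assms by auto
qed

lemma CC2:
  assumes "m \<ge> 2"
  shows "mmul n (Cmat m) (Cmat m) i (i+2) =
         (if i + 1 \<in> {1..n} then Cmat m i (i+1) * Cmat m (i+1) (i+2) else 0)"
  unfolding mmul_def
proof (rule sum_single)
  fix l assume "l \<noteq> i + 1"
  then show "Cmat m i l * Cmat m l (i + 2) = 0"
    using Cnz[of m i l] Cnz[of m l "i+2"] assms by fastforce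
qed auto

lemma Wnz:
  assumes "m \<ge> 2" "Wm n (Cmat m) i j \<noteq> 0"
  shows "i \<le> j"
proof -
  obtain k where k: "mmul n (Cmat m) (Cmat m) i k * cnj (Cmat m j k) \<noteq> 0"
    using sum_nz_ex[OF assms(2)[unfolded Wm_def mmul_def[of n "mmul n (Cmat m) (Cmat m)"] madj_def]]
    by auto
  then have "i + 2 \<le> k" using CCnz[OF assms(1)] by fastforce
  moreover have "Cmat m j k \<noteq> 0" using k by auto
  ultimately show ?thesis using Cnz[of m j k] assms by auto
qed

lemma Wdiag:
  assumes "m \<ge> 2"
  shows "Wm n (Cmat m) i i =
     (if i + 2 \<in> {1..n} then mmul n (Cmat m) (Cmat m) i (i+2) * cnj (Cmat m i (i+2)) else 0)"
  unfolding Wm_def mmul_def[of n "mmul n (Cmat m) (Cmat m)"] madj_def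
proof (rule sum_single)
  fix k assume "k \<noteq> i + 2"
  then show "mmul n (Cmat m) (Cmat m) i k * cnj (Cmat m i k) = 0"
    using CCnz[OF assms(1), of n i k] Cnz[of m i k] assms by fastforce
qed auto

lemma Wdiag2:
  assumes "m \<ge> 2" "i \<in> {1..2*m}"
  shows "Wm (2*m) (Cmat m) i i = (if i = m - 1 then 1 else if i = m then -1 else 0)"
proof -
  have n1: "m - 1 + 2 = m + 1" "m - 1 + 1 = m" using assms by auto
  consider "i = m - 1" | "i = m" | "i \<noteq> m - 1" "i \<noteq> m" by blast
  then show ?thesis
  proof cases
    case 1
    have "Wm (2*m) (Cmat m) i i = mmul (2*m) (Cmat m) (Cmat m) (m-1) (m+1) * cnj (Cmat m (m-1) (m+1))"
      using Wdiag[OF assms(1), of "2*m" i] 1 n1 assms by simp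
    also have "mmul (2*m) (Cmat m) (Cmat m) (m-1) (m+1) = Cmat m (m-1) m * Cmat m m (m+1)"
      using CC2[OF assms(1), of "2*m" "m-1"] n1 assms by simp
    also have "Cmat m (m-1) m = 1" using C1[OF assms(1), of "m-1"] n1 assms by (simp; arith)
    also have "Cmat m m (m+1) = 1" using C1[OF assms(1), of "m"] assms by simp
    also have "Cmat m (m-1) (m+1) = 1" using C2[OF assms(1), of "m-1"] n1 assms by simp
    finally show ?thesis using 1 by simp
  next
    case 2
    have "Wm (2*m) (Cmat m) i i = mmul (2*m) (Cmat m) (Cmat m) m (m+2) * cnj (Cmat m m (m+2))"
      using Wdiag[OF assms(1), of "2*m" i] 2 assms by simp
    also have "mmul (2*m) (Cmat m) (Cmat m) m (m+2) = Cmat m m (m+1) * Cmat m (m+1) (m+2)"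
      using CC2[OF assms(1), of "2*m" "m"] assms by simp
    also have "Cmat m m (m+1) = 1" using C1[OF assms(1), of "m"] assms by simp
    also have "Cmat m (m+1) (m+2) = 1" using C1[OF assms(1), of "m+1"] assms
      by (simp add: add.assoc)
    also have "Cmat m m (m+2) = -1" using C2[OF assms(1), of "m"] assms by simp
    finally show ?thesis using 2 assms by simp
  next
    case 3
    have "Cmat m i (i+2) = 0" using C2[OF assms(1), of i] 3 by simp
    then show ?thesis using Wdiag[OF assms(1), of "2*m" i] 3 by simp
  qed
qed

lemma Tm_C: assumes "m \<ge> 2" shows "Tm (2*m) (Cmat m) = 2"
proof -
  let ?W = "Wm (2*m) (Cmat m)"
  have "Tm (2*m) (Cmat m) = (\<Sum>i=1..2*m. \<Sum>k=1..2*m. ?W i k * ?W k i)"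
    unfolding Tm_def tr_def mmul_def ..
  also have "\<dots> = (\<Sum>i=1..2*m. ?W i i * ?W i i)"
  proof (rule sum.cong[OF refl])
    fix i assume "i \<in> {1..2*m}"
    have "(\<Sum>k=1..2*m. ?W i k * ?W k i) = (if i \<in> {1..2*m} then ?W i i * ?W i i else 0)"
    proof (rule sum_single)
      fix k assume "k \<noteq> i"
      then show "?W i k * ?W k i = 0" using Wnz[OF assms, of "2*m" i k] Wnz[OF assms, of "2*m" k i]
        by fastforce
    qed auto
    then show "(\<Sum>k=1..2*m. ?W i k * ?W k i) = ?W i i * ?W i i"
      using \<open>i \<in> {1..2*m}\<close> by simp
  qed
  also have "\<dots> = (\<Sum>i=1..2*m. (if i = m - 1 then 1 else 0) + (if i = m then 1 else 0))"
    by (rule sum.cong[OF refl]) (use assms in \<open>auto simp: Wdiag2\<close>)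
  also have "\<dots> = 2" using assms by (simp add: sum.distrib; arith)
  finally show ?thesis .
qed

lemma not_rot: assumes "m \<ge> 2" shows "\<not> rotationally_invariant (2 * m) (Cmat m)"
proof
  assume "rotationally_invariant (2 * m) (Cmat m)"
  then have "unitarily_similar (2*m) (Cmat m) (\<lambda>i j. cis (pi/2) * Cmat m i j)"
    unfolding rotationally_invariant_def by blast
  then obtain U where U: "unitary_mat (2*m) U"
    "\<forall>i\<in>{1..2*m}. \<forall>j\<in>{1..2*m}. mmul (2*m) (mmul (2*m) U (Cmat m)) (madj U) i j = \<i> * Cmat m i j"
    unfolding unitarily_similar_def by auto
  have "Tm (2*m) (Cmat m) = Tm (2*m) (mmul (2*m) (mmul (2*m) U (Cmat m)) (madj U))"
    using Tm_unitary[OF U(1)] by simp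
  also have "\<dots> = Tm (2*m) (\<lambda>i j. \<i> * Cmat m i j)"
    by (rule Tm_cong) (use U(2) in auto)
  also have "\<dots> = - Tm (2*m) (Cmat m)" by (rule Tm_scale)
  finally show False using Tm_C[OF assms] by simp
qed



lemma cinner_norm:
  "cinner N (normalize N v) (normalize N w) = cinner N v w / complex_of_real (vnorm N v * vnorm N w)"
  unfolding cinner_def normalize_def
  by (simp add: sum_divide_distrib)

lemma key_ineq:
  fixes S :: complex and c :: real
  assumes "Im S \<noteq> 0"
  shows "cmod (S + complex_of_real (sqrt 2 * c) + complex_of_real (sqrt 2 - 1) * cnj S)
         < sqrt 2 * cmod (S + complex_of_real c)"
proof -
  let ?B = "S + complex_of_real (sqrt 2 * c) + complex_of_real (sqrt 2 - 1) * cnj S"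
  let ?A = "S + complex_of_real c"
  have r2: "sqrt 2 * sqrt 2 = (2::real)" by simp
  have reB: "Re ?B = sqrt 2 * (Re S + c)" by (simp add: algebra_simps)
  have imB: "Im ?B = (2 - sqrt 2) * Im S" by (simp add: algebra_simps)
  have "(cmod ?B)\<^sup>2 = (sqrt 2 * (Re S + c))\<^sup>2 + ((2 - sqrt 2) * Im S)\<^sup>2"
    using reB imB by (simp add: cmod_power2)
  also have "\<dots> = 2 * (Re S + c)\<^sup>2 + (6 - 4 * sqrt 2) * (Im S)\<^sup>2"
    by (simp add: power2_eq_square algebra_simps r2)
  also have "\<dots> < 2 * (Re S + c)\<^sup>2 + 2 * (Im S)\<^sup>2"
  proof -
    have "(Im S)\<^sup>2 > 0" using assms by simp
    moreover have "sqrt 2 > (1::real)" by simp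
    ultimately show ?thesis by (simp add: mult_strict_right_mono)
  qed
  also have "\<dots> = (sqrt 2 * cmod ?A)\<^sup>2"
    by (simp add: power_mult_distrib cmod_power2 algebra_simps)
  finally show ?thesis
    by (rule power2_less_imp_less) simp
qed

theorem mainTheorem19:
  fixes m :: nat
  assumes "m \<ge> 2"
  shows "cmod (cinner (2 * m) (normalize (2 * m) (v0 m)) (normalize (2 * m) (v4 m)))
           > cmod (cinner (2 * m) (normalize (2 * m) (v4 m)) (normalize (2 * m) (v2 m)))
         \<and> \<not> rotationally_invariant (2 * m) (Cmat m)"
proof
  show "\<not> rotationally_invariant (2 * m) (Cmat m)" by (rule not_rot[OF assms])
next
  obtain n where m: "m = Suc n" and n1: "n \<ge> 1" using assms by (cases m) auto
  define a where "a = vnorm (2*m) (v0 m)"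
  define b where "b = vnorm (2*m) (v4 m)"
  define d where "d = vnorm (2*m) (v2 m)"
  let ?I1 = "cinner (2 * m) (v0 m) (v4 m)"
  let ?I2 = "cinner (2 * m) (v4 m) (v2 m)"
  have NS0p: "(\<Sum>j<n. (uu n j)\<^sup>2) + (uu n n)\<^sup>2 / 2 > 0"
  proof -
    have "(\<Sum>j<n. (uu n j)\<^sup>2) \<ge> 0" by (simp add: sum_nonneg)
    moreover have "(uu n n)\<^sup>2 > 0" using uu_ge1[OF n1, of n] by simp
    ultimately show ?thesis by linarith
  qed
  have apos: "a > 0" unfolding a_def vnorm_def m NS0[OF n1] using NS0p by simp
  have bpos: "b > 0" unfolding b_def vnorm_def m using v4_pos[OF n1] by simp
  have dval: "d = sqrt 2 * a"
  proof -
    have "d = sqrt (2 * ((\<Sum>j<n. (uu n j)\<^sup>2) + (uu n n)\<^sup>2 / 2))"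
      unfolding d_def vnorm_def m NS2[OF n1] by (simp add: algebra_simps)
    then show ?thesis unfolding a_def vnorm_def m NS0[OF n1] by (simp only: real_sqrt_mult)
  qed
  have c1: "cmod ?I1 = cmod (SS n + complex_of_real ((uu n n)\<^sup>2 / 2))"
  proof -
    have "cmod (eta ^ n * ?I1) = cmod ?I1" by (simp add: norm_mult norm_power cmod_eta)
    then show ?thesis using I1[OF n1] m by simp
  qed
  have c2: "cmod ?I2 = cmod (SS n + complex_of_real (sqrt 2 * ((uu n n)\<^sup>2 / 2)) + complex_of_real (sqrt 2 - 1) * cnj (SS n))"
  proof -
    have "cmod (eta ^ n * ?I2) = cmod ?I2" by (simp add: norm_mult norm_power cmod_eta)
    then show ?thesis using I2[OF n1] m by simp
  qed
  have ineq: "cmod ?I2 < sqrt 2 * cmod ?I1"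
    unfolding c1 c2 by (rule key_ineq) (use ImSS[OF n1] in simp)
  have L: "cmod (cinner (2 * m) (normalize (2 * m) (v0 m)) (normalize (2 * m) (v4 m))) = cmod ?I1 / (a * b)"
    unfolding cinner_norm a_def b_def using apos bpos a_def b_def by (simp add: norm_divide norm_mult)
  have R: "cmod (cinner (2 * m) (normalize (2 * m) (v4 m)) (normalize (2 * m) (v2 m))) = cmod ?I2 / (b * d)"
    unfolding cinner_norm b_def d_def using apos bpos dval b_def d_def by (simp add: norm_divide norm_mult)
  have "cmod ?I2 / (b * d) < cmod ?I1 / (a * b)"
  proof -
    have "cmod ?I2 / (b * d) = cmod ?I2 / (sqrt 2 * (a * b))" using dval by (simp add: algebra_simps)
    also have "\<dots> < (sqrt 2 * cmod ?I1) / (sqrt 2 * (a * b))"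
      by (rule divide_strict_right_mono) (use ineq apos bpos in auto)
    also have "\<dots> = cmod ?I1 / (a * b)" by simp
    finally show ?thesis .
  qed
  then show "cmod (cinner (2 * m) (normalize (2 * m) (v0 m)) (normalize (2 * m) (v4 m)))
           > cmod (cinner (2 * m) (normalize (2 * m) (v4 m)) (normalize (2 * m) (v2 m)))"
    using L R by simp
qed

end
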